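(* Let $F$ be a CNF formula over variables $x_1,\dots,x_n$ with clauses $C_1,\dots,C_m$, each containing two or three literals. Let $H=(V,A)$ be the 1-2-directed hypergraph constructed from $F$ as described in the context. Then $H$ contains an acyclic path from the node $\{\alpha,\beta\}$ to the node $\{c_{m+1},\gamma\}$ if and only if $F$ has a satisfying truth assignment.
   Context: **Triples and arcs.** A rooted triple $pq|o$, with $p,q,o$ distinct leaf labels and unordered in $p,q$, corresponds to the hyperarc $\mathrm{arc}(pq|o)= \{p,q\}\to\{\{p,o\},\{q,o\}\}$. Thus hypergraph nodes are unordered pairs of leaves; we write $pq$ for $\{p,q\}$. **Hypergraph notions.** A hyperarc $u\to\{v,v'\}$ has tail $u$ and heads $\{v,v'\}$. A path from $u_0$ to $u_\ell$ is a sequence $(a_1,\dots,a_\ell)$ of distinct hyperarcs with $\mathrm{t}(a_1)=u_0$, $u_\ell\in\mathrm{h}(a_\ell)$, and $\mathrm{t}(a_{k+1})\in\mathrm{h}(a_k)$ for all $k$. It is acyclic if no $a_k$ has a head equal to $\mathrm{t}(a_{k'})$ for some $k'<k$. **Construction.** Use leaves - $x_i^j,\bar x_i^j,y_i^j,\bar y_i^j$ for $i\in[n]$, $j\in[m]$; - $b_i,b'_i$ for $i\in[n+1]$; - $c_j,d_j$ for $j\in[m]$; - $c_{m+1}$, and $\alpha,\beta,\gamma$. The triple set $R$ is the union of the following groups. (i) Positive side of the gadget for each $i\in[n]$: - $b_ib'_i|x_i^1$ and $b'_ix_i^1|y_i^1$; - $x_i^jy_i^j|x_i^{j+1}$ and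 $y_i^jx_i^{j+1}|y_i^{j+1}$ for $1\le j\le m-1$; - $x_i^my_i^m|b_{i+1}$ and $y_i^mb_{i+1}|b'_{i+1}$. (ii) Negative side of the gadget for each $i\in[n]$: - $b_ib'_i|\bar x_i^1$ and $b'_i\bar x_i^1|\bar y_i^1$; - $\bar x_i^j\bar y_i^j|\bar x_i^{j+1}$ and $\bar y_i^j\bar x_i^{j+1}|\bar y_i^{j+1}$ for $1\le j\le m-1$; - $\bar x_i^m\bar y_i^m|b_{i+1}$ and $\bar x_i^mb_{i+1}|b'_{i+1}$. (iii) For each clause $C_j$: - for each positive occurrence of $x_i$ in $C_j$, the triples $c_jd_j|x_i^j$, $c_jx_i^j|y_i^j$, $c_jy_i^j|c_{j+1}$; - for each negative occurrence of $x_i$ in $C_j$, the triples $c_jd_j|\bar x_i^j$, $c_j\bar x_i^j|\bar y_i^j$, $c_j\bar y_i^j|c_{j+1}$; - if $j<m$, the triple $c_jc_{j+1}|d_{j+1}$. (iv) Connecting triples: $\alpha\beta|b_1$, $\beta b_1|b'_1$, $b_{n+1}b'_{n+1}|c_1$, $b'_{n+1}c_1|d_1$, $c_mc_{m+1}|\gamma$. Then $A=\{\mathrm{arc}(t):t\in R\}$, and $V$ is the set of all leaf pairs occurring as a tail or head of an arc in $A$. *)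

theory Defs
  imports Main
begin

text \<open>Leaf labels of the construction (indices are 1-based as in the paper).\<close>
datatype leaf =
    X nat nat
  | XB nat nat
  | Y nat nat
  | YB nat nat
  | B nat
  | B' nat
  | Cc nat
  | D nat
  | Alpha | Beta | Gamma

text \<open>A rooted triple pq|o is encoded as (p, q, o).\<close>
type_synonym triple = "leaf \<times> leaf \<times> leaf"

text \<open>Hypergraph nodes are unordered pairs of leaves (two-element sets);
  a hyperarc is (tail, set of heads).\<close>
type_synonym node = "leaf set"
type_synonym hyperarc = "node \<times> node set"

definition arc :: "triple \<Rightarrow> hyperarc" where
  "arc t = (case t of (p, q, r) \<Rightarrow> ({p, q}, {{p, r}, {q, r}}))"

definition tl_of :: "hyperarc \<Rightarrow> node" where "tl_of a = fst a"
definition hd_of :: "hyperarc \<Rightarrow> node set" where "hd_of a = snd a"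

text \<open>A CNF formula: clauses C_1..C_m given by cl :: nat => literal set, where a
  literal is (i, True) for x_i and (i, False) for the negation of x_i.\<close>
type_synonym literal = "nat \<times> bool"

definition satisfies :: "(nat \<Rightarrow> bool) \<Rightarrow> nat \<Rightarrow> (nat \<Rightarrow> literal set) \<Rightarrow> bool" where
  "satisfies \<sigma> m cl \<longleftrightarrow> (\<forall>j\<in>{1..m}. \<exists>(i, s)\<in>cl j. \<sigma> i = s)"

definition R_pos :: "nat \<Rightarrow> nat \<Rightarrow> triple set" where
  "R_pos n m = (\<Union>i\<in>{1..n}.
      {(B i, B' i, X i 1), (B' i, X i 1, Y i 1)}
    \<union> (\<Union>j\<in>{1..m-1}. {(X i j, Y i j, X i (j+1)), (Y i j, X i (j+1), Y i (j+1))})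
    \<union> {(X i m, Y i m, B (i+1)), (Y i m, B (i+1), B' (i+1))})"

definition R_neg :: "nat \<Rightarrow> nat \<Rightarrow> triple set" where
  "R_neg n m = (\<Union>i\<in>{1..n}.
      {(B i, B' i, XB i 1), (B' i, XB i 1, YB i 1)}
    \<union> (\<Union>j\<in>{1..m-1}. {(XB i j, YB i j, XB i (j+1)), (YB i j, XB i (j+1), YB i (j+1))})
    \<union> {(XB i m, YB i m, B (i+1)), (XB i m, B (i+1), B' (i+1))})"

definition R_clause :: "nat \<Rightarrow> (nat \<Rightarrow> literal set) \<Rightarrow> triple set" where
  "R_clause m cl = (\<Union>j\<in>{1..m}.
      (\<Union>i\<in>{i. (i, True) \<in> cl j}.
         {(Cc j, D j, X i j), (Cc j, X i j, Y i j), (Cc j, Y i j, Cc (j+1))})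
    \<union> (\<Union>i\<in>{i. (i, False) \<in> cl j}.
         {(Cc j, D j, XB i j), (Cc j, XB i j, YB i j), (Cc j, YB i j, Cc (j+1))})
    \<union> (if j < m then {(Cc j, Cc (j+1), D (j+1))} else {}))"

definition R_conn :: "nat \<Rightarrow> nat \<Rightarrow> triple set" where
  "R_conn n m = {(Alpha, Beta, B 1), (Beta, B 1, B' 1), (B (n+1), B' (n+1), Cc 1),
                 (B' (n+1), Cc 1, D 1), (Cc m, Cc (m+1), Gamma)}"

definition R_of :: "nat \<Rightarrow> nat \<Rightarrow> (nat \<Rightarrow> literal set) \<Rightarrow> triple set" where
  "R_of n m cl = R_pos n m \<union> R_neg n m \<union> R_clause m cl \<union> R_conn n m"

definition A_of :: "nat \<Rightarrow> nat \<Rightarrow> (nat \<Rightarrow> literal set) \<Rightarrow> hyperarc set" where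
  "A_of n m cl = arc ` R_of n m cl"

definition V_of :: "nat \<Rightarrow> nat \<Rightarrow> (nat \<Rightarrow> literal set) \<Rightarrow> node set" where
  "V_of n m cl = {u. \<exists>a\<in>A_of n m cl. u = tl_of a \<or> u \<in> hd_of a}"

definition is_path :: "node set \<times> hyperarc set \<Rightarrow> node \<Rightarrow> node \<Rightarrow> hyperarc list \<Rightarrow> bool" where
  "is_path H u v as \<longleftrightarrow>
     as \<noteq> [] \<and> distinct as \<and> set as \<subseteq> snd H \<and>
     tl_of (hd as) = u \<and> v \<in> hd_of (last as) \<and>
     (\<forall>k. Suc k < length as \<longrightarrow> tl_of (as ! Suc k) \<in> hd_of (as ! k))"

definition acyclic_path :: "hyperarc list \<Rightarrow> bool" where
  "acyclic_path as \<longleftrightarrow>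
     (\<forall>k k'. k' < k \<and> k < length as \<longrightarrow> tl_of (as ! k') \<notin> hd_of (as ! k))"

end

theory Submission
  imports Defs
begin


definition Xs :: "bool \<Rightarrow> nat \<Rightarrow> nat \<Rightarrow> leaf" where "Xs s i j = (if s then X i j else XB i j)"
definition Ys :: "bool \<Rightarrow> nat \<Rightarrow> nat \<Rightarrow> leaf" where "Ys s i j = (if s then Y i j else YB i j)"

fun isC :: "leaf \<Rightarrow> bool" where "isC (Cc _) = True" | "isC _ = False"

fun PT :: "nat \<Rightarrow> leaf \<Rightarrow> bool" where
  "PT j (Cc j') = (j \<le> j')" | "PT j (D j') = (j < j')" | "PT j (X i j') = (j < j')"
| "PT j (XB i j') = (j < j')" | "PT j (Y i j') = (j \<le> j')" | "PT j (YB i j') = (j \<le> j')"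
| "PT j Gamma = True" | "PT j _ = False"

fun QT :: "leaf \<Rightarrow> bool" where "QT (Cc _) = True" | "QT Gamma = True" | "QT _ = False"

fun PU :: "nat \<Rightarrow> nat \<Rightarrow> leaf \<Rightarrow> bool" where
  "PU i0 j0 (X i j) = (i0 < i \<or> (i = i0 \<and> j0 \<le> j))"
| "PU i0 j0 (Y i j) = (i0 < i \<or> (i = i0 \<and> j0 \<le> j))"
| "PU i0 j0 (XB i j) = (i0 < i \<or> (i = i0 \<and> j0 \<le> j))"
| "PU i0 j0 (YB i j) = (i0 < i \<or> (i = i0 \<and> j0 \<le> j))"
| "PU i0 j0 (B i) = (i0 < i)" | "PU i0 j0 (B' i) = (i0 < i)"
| "PU i0 j0 (Cc _) = True" | "PU i0 j0 (D _) = True" | "PU i0 j0 Gamma = True"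
| "PU i0 j0 Alpha = False" | "PU i0 j0 Beta = False"

fun PW :: "bool \<Rightarrow> nat \<Rightarrow> leaf \<Rightarrow> bool" where
  "PW s i0 (X i j) = (i0 < i \<or> (i = i0 \<and> s))"
| "PW s i0 (Y i j) = (i0 < i \<or> (i = i0 \<and> s))"
| "PW s i0 (XB i j) = (i0 < i \<or> (i = i0 \<and> \<not> s))"
| "PW s i0 (YB i j) = (i0 < i \<or> (i = i0 \<and> \<not> s))"
| "PW s i0 (B i) = (i0 < i)" | "PW s i0 (B' i) = (i0 < i)"
| "PW s i0 (Cc _) = True" | "PW s i0 (D _) = True" | "PW s i0 Gamma = True"
| "PW s i0 Alpha = False" | "PW s i0 Beta = False"

lemmas Rdefs = R_of_def R_pos_def R_neg_def R_clause_def R_conn_def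

lemma R_cases:
  assumes "(p,q,r) \<in> R_of n m cl"
  obtains (pos) i where "1 \<le> i" "i \<le> n" "(p,q,r) \<in> {(B i, B' i, X i 1), (B' i, X i 1, Y i 1), (X i m, Y i m, B (i+1)), (Y i m, B (i+1), B' (i+1))}"
  | (posl) i j where "1 \<le> i" "i \<le> n" "1 \<le> j" "j < m" "(p,q,r) \<in> {(X i j, Y i j, X i (j+1)), (Y i j, X i (j+1), Y i (j+1))}"
  | (neg) i where "1 \<le> i" "i \<le> n" "(p,q,r) \<in> {(B i, B' i, XB i 1), (B' i, XB i 1, YB i 1), (XB i m, YB i m, B (i+1)), (XB i m, B (i+1), B' (i+1))}"
  | (negl) i j where "1 \<le> i" "i \<le> n" "1 \<le> j" "j < m" "(p,q,r) \<in> {(XB i j, YB i j, XB i (j+1)), (YB i j, XB i (j+1), YB i (j+1))}"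
  | (cp) i j where "1 \<le> j" "j \<le> m" "(i,True) \<in> cl j" "(p,q,r) \<in> {(Cc j, D j, X i j), (Cc j, X i j, Y i j), (Cc j, Y i j, Cc (j+1))}"
  | (cn) i j where "1 \<le> j" "j \<le> m" "(i,False) \<in> cl j" "(p,q,r) \<in> {(Cc j, D j, XB i j), (Cc j, XB i j, YB i j), (Cc j, YB i j, Cc (j+1))}"
  | (cl) j where "1 \<le> j" "j < m" "(p,q,r) = (Cc j, Cc (j+1), D (j+1))"
  | (conn) "(p,q,r) \<in> {(Alpha, Beta, B 1), (Beta, B 1, B' 1), (B (n+1), B' (n+1), Cc 1),
                 (B' (n+1), Cc 1, D 1), (Cc m, Cc (m+1), Gamma)}"
proof -
  have "(p,q,r) \<in> R_pos n m \<or> (p,q,r) \<in> R_neg n m \<or> (p,q,r) \<in> R_clause m cl \<or> (p,q,r) \<in> R_conn n m"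
    using assms unfolding R_of_def by blast
  then show ?thesis
  proof (elim disjE)
    assume "(p,q,r) \<in> R_pos n m"
    then obtain i where i: "i \<in> {1..n}" and
      "(p,q,r) \<in> {(B i, B' i, X i 1), (B' i, X i 1, Y i 1)}
    \<union> (\<Union>j\<in>{1..m-1}. {(X i j, Y i j, X i (j+1)), (Y i j, X i (j+1), Y i (j+1))})
    \<union> {(X i m, Y i m, B (i+1)), (Y i m, B (i+1), B' (i+1))}" unfolding R_pos_def by blast
    then show ?thesis using pos posl i by fastforce
  next
    assume "(p,q,r) \<in> R_neg n m"
    then obtain i where i: "i \<in> {1..n}" and
      "(p,q,r) \<in> {(B i, B' i, XB i 1), (B' i, XB i 1, YB i 1)}
    \<union> (\<Union>j\<in>{1..m-1}. {(XB i j, YB i j, XB i (j+1)), (YB i j, XB i (j+1), YB i (j+1))})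
    \<union> {(XB i m, YB i m, B (i+1)), (XB i m, B (i+1), B' (i+1))}" unfolding R_neg_def by blast
    then show ?thesis using neg negl i by fastforce
  next
    assume "(p,q,r) \<in> R_clause m cl"
    then obtain j where j: "j \<in> {1..m}" and
      "(p,q,r) \<in> (\<Union>i\<in>{i. (i, True) \<in> cl j}.
         {(Cc j, D j, X i j), (Cc j, X i j, Y i j), (Cc j, Y i j, Cc (j+1))})
    \<union> (\<Union>i\<in>{i. (i, False) \<in> cl j}.
         {(Cc j, D j, XB i j), (Cc j, XB i j, YB i j), (Cc j, YB i j, Cc (j+1))})
    \<union> (if j < m then {(Cc j, Cc (j+1), D (j+1))} else {})" unfolding R_clause_def by blast
    then show ?thesis using cp cn cl j by (auto split: if_splits)
  next
    assume "(p,q,r) \<in> R_conn n m"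
    then show ?thesis using conn unfolding R_conn_def by blast
  qed
qed

lemma crossC:
  assumes "(p,q,r) \<in> R_of n m cl" "isC r" "\<not> isC p" "\<not> isC q"
  shows "(p,q,r) = (B (n+1), B' (n+1), Cc 1)"
  using assms(1) by (cases rule: R_cases) (use assms in auto)


lemma last_arc:
  assumes "(p,q,r) \<in> R_of n m cl" "p = Gamma \<or> q = Gamma \<or> r = Gamma"
  shows "(p,q,r) = (Cc m, Cc (m+1), Gamma)"
  using assms(1) by (cases rule: R_cases) (use assms in auto)


lemma crossW:
  assumes "(p,q,r) \<in> R_of n m cl" "PW s i0 p" "PW s i0 q" "\<not> PW s i0 r" "\<not> isC p" "\<not> isC q"
  shows False
  using assms(1) by (cases rule: R_cases) (use assms in auto)


lemma crossT:
  assumes "(p,q,r) \<in> R_of n m cl" "1 \<le> j" "j \<le> m" "PT j r"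
    "(PT j p \<and> (QT p \<or> QT r)) \<or> (PT j q \<and> (QT q \<or> QT r))"
    "\<not> (PT j p \<and> PT j q \<and> (QT p \<or> QT q))"
  shows "\<exists>i s. (i,s) \<in> cl j \<and> (p,q,r) = (Cc j, Xs s i j, Ys s i j)"
  using assms(1)
proof (cases rule: R_cases)
  case (cp i j')
  hence "j' = j" "(p,q,r) = (Cc j', X i j', Y i j')" using assms by auto
  then show ?thesis using cp by (intro exI[of _ i] exI[of _ True]) (auto simp: Xs_def Ys_def)
next
  case (cn i j')
  hence "j' = j" "(p,q,r) = (Cc j', XB i j', YB i j')" using assms by auto
  then show ?thesis using cn by (intro exI[of _ i] exI[of _ False]) (auto simp: Xs_def Ys_def)
qed (use assms in auto)


lemma crossU:
  assumes "(p,q,r) \<in> R_of n m cl" "1 \<le> i0" "i0 \<le> n" "1 \<le> j0" "j0 \<le> m" "PU i0 j0 r"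
    "\<not> (PU i0 j0 p \<and> PU i0 j0 q)" "\<not> isC p" "\<not> isC q"
  shows "\<exists>s. (PU i0 j0 p \<longrightarrow> {p,r} = {Xs s i0 j0, Ys s i0 j0}) \<and> (PU i0 j0 q \<longrightarrow> {q,r} = {Xs s i0 j0, Ys s i0 j0})"
  using assms(1)
proof (cases rule: R_cases)
  case (pos i)
  then show ?thesis using assms by (intro exI[of _ True]) (auto simp: Xs_def Ys_def)
next
  case (posl i j)
  then show ?thesis using assms by (intro exI[of _ True]) (auto simp: Xs_def Ys_def)
next
  case (neg i)
  then show ?thesis using assms by (intro exI[of _ False]) (auto simp: Xs_def Ys_def)
next
  case (negl i j)
  then show ?thesis using assms by (intro exI[of _ False]) (auto simp: Xs_def Ys_def)
qed (use assms in auto)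




fun tw :: "node \<Rightarrow> triple list \<Rightarrow> node \<Rightarrow> bool" where
  "tw u [] v = (u = v)"
| "tw u ((p,q,r) # ts) v = (u = {p,q} \<and> (tw {p,r} ts v \<or> tw {q,r} ts v))"

lemma tw_append: "tw u (xs @ ys) v = (\<exists>w. tw u xs w \<and> tw w ys v)"
  by (induction u xs v rule: tw.induct) auto

lemma tw_path:
  assumes "tw u ts v" "ts \<noteq> []"
  shows "tl_of (hd (map arc ts)) = u \<and> v \<in> hd_of (last (map arc ts))
     \<and> (\<forall>k. Suc k < length (map arc ts) \<longrightarrow> tl_of (map arc ts ! Suc k) \<in> hd_of (map arc ts ! k))"
  using assms
proof (induction ts arbitrary: u)
  case Nil
  then show ?case by simp
next
  case (Cons t ts)
  obtain p q r where t: "t = (p,q,r)" by (cases t) auto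
  show ?case
  proof (cases "ts = []")
    case True
    then show ?thesis using Cons t by (auto simp: arc_def tl_of_def hd_of_def)
  next
    case False
    from Cons.prems(1) t obtain w where w: "w \<in> {{p,r},{q,r}}" "tw w ts v" and u: "u = {p,q}" by auto
    then have IH: "tl_of (hd (map arc ts)) = w \<and> v \<in> hd_of (last (map arc ts))
     \<and> (\<forall>k. Suc k < length (map arc ts) \<longrightarrow> tl_of (map arc ts ! Suc k) \<in> hd_of (map arc ts ! k))"
      using Cons.IH False by blast
    have "tl_of (map arc (t # ts) ! Suc k) \<in> hd_of (map arc (t # ts) ! k)"
      if kk: "Suc k < length (map arc (t # ts))" for k
    proof (cases k)
      case 0
      then show ?thesis using IH w False t by (auto simp: arc_def tl_of_def hd_of_def hd_conv_nth)
    next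
      case (Suc k')
      then show ?thesis using IH kk by auto
    qed
    moreover have "tl_of (hd (map arc (t#ts))) = u" using u t by (simp add: arc_def tl_of_def)
    moreover have "last (map arc (t#ts)) = last (map arc ts)" using False by simp
    ultimately show ?thesis using IH by auto
  qed
qed

lemma rank_acyc:
  fixes N :: "node \<Rightarrow> nat"
  assumes chain: "\<forall>k. Suc k < length as \<longrightarrow> tl_of (as!Suc k) \<in> hd_of (as!k)"
    and inc: "\<forall>a\<in>set as. \<forall>h\<in>hd_of a. N (tl_of a) < N h"
  shows "acyclic_path as \<and> distinct as"
proof -
  have stepN: "N (tl_of (as!j)) < N (tl_of (as!Suc j))" if "Suc j < length as" for j
    using chain inc that by auto
  have mono: "N (tl_of (as!i)) \<le> N (tl_of (as!j))" if "i \<le> j" "j < length as" for i j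
    using that
  proof (induction j)
    case 0 then show ?case by simp
  next
    case (Suc j)
    show ?case
    proof (cases "i = Suc j")
      case True then show ?thesis by simp
    next
      case False
      then have "N (tl_of (as!i)) \<le> N (tl_of (as!j))" using Suc by auto
      also have "\<dots> < N (tl_of (as!Suc j))" using stepN Suc by auto
      finally show ?thesis by simp
    qed
  qed
  have strict: "N (tl_of (as!i)) < N (tl_of (as!j))" if ij: "i < j" "j < length as" for i j
  proof -
    obtain j' where j': "j = Suc j'" using ij by (cases j) auto
    have "N (tl_of (as!i)) \<le> N (tl_of (as!j'))" using mono ij j' by auto
    also have "\<dots> < N (tl_of (as!j))" using stepN ij j' by auto
    finally show ?thesis .
  qed
  have "acyclic_path as"
    unfolding acyclic_path_def
  proof (intro allI impI notI)
    fix k k' assume kk: "k' < k \<and> k < length as" and h: "tl_of (as!k') \<in> hd_of (as!k)"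
    have "N (tl_of (as!k')) \<le> N (tl_of (as!k))" using mono kk by auto
    also have "\<dots> < N (tl_of (as!k'))" using inc h kk by auto
    finally show False by simp
  qed
  moreover have "distinct as"
    unfolding distinct_conv_nth
  proof (intro allI impI)
    fix i j assume ij: "i < length as" "j < length as" "i \<noteq> j"
    then consider "i < j" | "j < i" by linarith
    then show "as!i \<noteq> as!j"
      by cases (use strict ij in fastforce)+
  qed
  ultimately show ?thesis by simp
qed

lemma sum_pair_le: "(\<Sum>l\<in>{p,q}. f l) \<le> f p + (f q :: nat)"
  by (cases "p = q") auto

lemma arc_inc:
  fixes lm :: "leaf \<Rightarrow> nat"
  assumes "lm p < lm r" "lm q < lm r"
  shows "\<forall>h\<in>hd_of (arc (p,q,r)). (\<Sum>l\<in>tl_of (arc (p,q,r)). lm l) < (\<Sum>l\<in>h. lm l)"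
proof -
  have "p \<noteq> r" "q \<noteq> r" using assms by auto
  then show ?thesis using assms sum_pair_le[of lm p q]
    by (auto simp: arc_def tl_of_def hd_of_def)
qed




lemma arc_cases:
  "a \<in> A_of n m cl \<Longrightarrow> \<exists>p q r. (p,q,r) \<in> R_of n m cl \<and> tl_of a = {p,q} \<and> hd_of a = {{p,r},{q,r}}"
  unfolding A_of_def arc_def tl_of_def hd_of_def by force

lemma cut:
  fixes f :: "nat \<Rightarrow> 'a"
  assumes "f p \<in> S" "f q \<notin> S" "p \<le> q"
  shows "\<exists>k. p \<le> k \<and> k < q \<and> f k \<in> S \<and> f (Suc k) \<notin> S"
  using assms
proof (induction q)
  case 0 then show ?case by auto
next
  case (Suc q)
  have "p \<noteq> Suc q" using Suc by auto
  show ?case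
  proof (cases "f q \<in> S")
    case True
    then show ?thesis using Suc \<open>p \<noteq> Suc q\<close> by (intro exI[of _ q]) auto
  next
    case False
    have "p \<le> q" using Suc \<open>p \<noteq> Suc q\<close> by auto
    then obtain k where "p \<le> k \<and> k < q \<and> f k \<in> S \<and> f (Suc k) \<notin> S" using Suc False by blast
    then show ?thesis by (intro exI[of _ k]) auto
  qed
qed

lemma rev_dir:
  assumes m1: "1 \<le> m" and lits: "\<forall>j\<in>{1..m}. \<forall>(i, s)\<in>cl j. i \<in> {1..n}"
    and path: "is_path (V_of n m cl, A_of n m cl) {Alpha, Beta} {Cc (m+1), Gamma} as"
    and acyc: "acyclic_path as"
  shows "\<exists>\<sigma>. satisfies \<sigma> m cl"
proof -
  define L where "L = length as"
  define f where "f k = tl_of (as!k)" for k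
  have ne: "as \<noteq> []" using path unfolding is_path_def by auto
  then have L0: "0 < L" unfolding L_def by auto
  have inA: "\<And>k. k < L \<Longrightarrow> as!k \<in> A_of n m cl"
    using path unfolding is_path_def L_def by auto
  have f0: "f 0 = {Alpha, Beta}" using path ne unfolding is_path_def f_def by (simp add: hd_conv_nth)
  have lastT: "{Cc (m+1), Gamma} \<in> hd_of (as!(L-1))"
    using path ne unfolding is_path_def L_def by (simp add: last_conv_nth)
  have chain: "\<And>k. Suc k < L \<Longrightarrow> f (Suc k) \<in> hd_of (as!k)"
    using path unfolding is_path_def L_def f_def by auto
  have ac: "\<And>k' k. k' < k \<Longrightarrow> k < L \<Longrightarrow> f k' \<notin> hd_of (as!k)"
    using acyc unfolding acyclic_path_def f_def L_def by blast
  have step: "\<And>k. Suc k < L \<Longrightarrow> \<exists>p q r. (p,q,r) \<in> R_of n m cl \<and> f k = {p,q}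
      \<and> (f (Suc k) = {p,r} \<or> f (Suc k) = {q,r}) \<and> hd_of (as!k) = {{p,r},{q,r}}"
  proof -
    fix k assume k: "Suc k < L"
    obtain p q r where "(p,q,r) \<in> R_of n m cl" "tl_of (as!k) = {p,q}" "hd_of (as!k) = {{p,r},{q,r}}"
      using arc_cases[OF inA[of k]] k by auto
    then show "?thesis k" using chain[OF k] unfolding f_def by auto
  qed
  have fL: "f (L-1) = {Cc m, Cc (m+1)}"
  proof -
    obtain p q r where pqr: "(p,q,r) \<in> R_of n m cl" "tl_of (as!(L-1)) = {p,q}" "hd_of (as!(L-1)) = {{p,r},{q,r}}"
      using arc_cases[OF inA[of "L-1"]] L0 by auto
    have "p = Gamma \<or> q = Gamma \<or> r = Gamma" using lastT pqr by (auto simp: doubleton_eq_iff)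
    with pqr(1) have "(p,q,r) = (Cc m, Cc (m+1), Gamma)" by (rule last_arc)
    then show ?thesis using pqr unfolding f_def by auto
  qed
  define inC where "inC t = (\<exists>l\<in>t. isC l)" for t
  have CL: "inC (f (L-1))" using fL unfolding inC_def by auto
  define k1 where "k1 = (LEAST k. inC (f k))"
  have k1C: "inC (f k1)" using CL unfolding k1_def by (rule LeastI)
  have k1le: "k1 \<le> L-1" using CL unfolding k1_def by (rule Least_le)
  have before: "\<And>k. k < k1 \<Longrightarrow> \<not> inC (f k)" unfolding k1_def by (rule not_less_Least)
  have nC0: "\<not> inC (f 0)" using f0 unfolding inC_def by simp
  have "k1 \<noteq> 0"
  proof
    assume "k1 = 0"
    then show False using k1C nC0 by simp
  qed
  define p0 where "p0 = k1 - 1"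
  have p0: "Suc p0 = k1" using \<open>k1 \<noteq> 0\<close> unfolding p0_def by auto
  have p0L: "Suc p0 < L" using p0 k1le L0 by auto
  have fp0: "f p0 = {B (n+1), B' (n+1)}"
  proof -
    obtain p q r where t: "(p,q,r) \<in> R_of n m cl" "f p0 = {p,q}" "f (Suc p0) = {p,r} \<or> f (Suc p0) = {q,r}"
      using step[OF p0L] by blast
    have "\<not> inC (f p0)" using before p0 by auto
    then have "\<not> isC p" "\<not> isC q" using t unfolding inC_def by auto
    moreover have "isC r" using k1C t p0 \<open>\<not> isC p\<close> \<open>\<not> isC q\<close> unfolding inC_def by auto
    ultimately show ?thesis using crossC[OF t(1)] t by auto
  qed
  have G2: "\<exists>a s. a \<le> p0 \<and> f a = {Xs s i j, Ys s i j}" if ij: "1 \<le> i" "i \<le> n" "1 \<le> j" "j \<le> m" for i j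
  proof -
    define S where "S = {t. \<forall>l\<in>t. PU i j l}"
    have "f 0 \<in> - S" using f0 unfolding S_def by auto
    moreover have "f p0 \<notin> - S" using fp0 ij unfolding S_def by auto
    ultimately obtain k where k: "k < p0" "f k \<notin> S" "f (Suc k) \<in> S" using cut[of f 0 "-S" p0] by auto
    obtain p q r where t: "(p,q,r) \<in> R_of n m cl" "f k = {p,q}" "f (Suc k) = {p,r} \<or> f (Suc k) = {q,r}"
      using step[of k] k p0L by auto
    have "\<not> inC (f k)" using before p0 k by auto
    then have nc: "\<not> isC p" "\<not> isC q" using t unfolding inC_def by auto
    have "PU i j r" "\<not> (PU i j p \<and> PU i j q)" using k t unfolding S_def by auto
    from crossU[OF t(1) ij this nc] obtain s where
      "(PU i j p \<longrightarrow> {p,r} = {Xs s i j, Ys s i j}) \<and> (PU i j q \<longrightarrow> {q,r} = {Xs s i j, Ys s i j})" by blast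
    then have "f (Suc k) = {Xs s i j, Ys s i j}" using t k unfolding S_def by auto
    then show ?thesis using k by (intro exI[of _ "Suc k"] exI[of _ s]) auto
  qed
  have G3: "False" if ab: "a < b" "b \<le> p0" and fa: "f a = {Xs s i j, Ys s i j}"
     and fb: "f b = {Xs (\<not> s) i j', Ys (\<not> s) i j'}" for a b s i j j'
  proof -
    define S where "S = {t. \<forall>l\<in>t. PW s i l}"
    have "f a \<in> S" using fa unfolding S_def by (cases s) (auto simp: Xs_def Ys_def)
    moreover have "f b \<notin> S" using fb unfolding S_def by (cases s) (auto simp: Xs_def Ys_def)
    ultimately obtain k where k: "a \<le> k" "k < b" "f k \<in> S" "f (Suc k) \<notin> S" using cut[of f a S b] ab by auto
    obtain p q r where t: "(p,q,r) \<in> R_of n m cl" "f k = {p,q}" "f (Suc k) = {p,r} \<or> f (Suc k) = {q,r}"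
      using step[of k] k ab p0L by auto
    have "\<not> inC (f k)" using before p0 k ab by auto
    then have nc: "\<not> isC p" "\<not> isC q" using t unfolding inC_def by auto
    have "PW s i p" "PW s i q" "\<not> PW s i r" using k t unfolding S_def by auto
    from crossW[OF t(1) this nc] show False .
  qed
  have G3': "False" if ab: "a \<le> p0" "b \<le> p0" and fa: "f a = {Xs s i j, Ys s i j}"
     and fb: "f b = {Xs (\<not> s) i j', Ys (\<not> s) i j'}" for a b s i j j'
  proof -
    have "Xs s i j \<notin> {Xs (\<not> s) i j', Ys (\<not> s) i j'}" by (cases s) (auto simp: Xs_def Ys_def)
    then have "a \<noteq> b" using fa fb by auto
    then consider "a < b" | "b < a" by linarith
    then show False
    proof cases
      case 1 then show ?thesis using G3 ab fa fb by blast
    next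
      case 2 then show ?thesis using G3[of b a "\<not> s" i j' j] ab fa fb by auto
    qed
  qed
  define \<sigma> where "\<sigma> i = (\<exists>a \<le> p0. f a = {XB i 1, YB i 1})" for i
  have "\<exists>(i,s)\<in>cl j. \<sigma> i = s" if j: "j \<in> {1..m}" for j
  proof -
    have j1: "1 \<le> j" "j \<le> m" using j by auto
    define T where "T = {t. (\<forall>l\<in>t. PT j l) \<and> (\<exists>l\<in>t. QT l)}"
    have "f 0 \<notin> T" using f0 unfolding T_def by auto
    moreover have "f (L-1) \<in> T" using fL j1 unfolding T_def by auto
    ultimately obtain k where k: "k < L-1" "f k \<in> -T" "f (Suc k) \<notin> -T" using cut[of f 0 "-T" "L-1"] by auto
    obtain p q r where t: "(p,q,r) \<in> R_of n m cl" "f k = {p,q}" "f (Suc k) = {p,r} \<or> f (Suc k) = {q,r}"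
      and hk: "hd_of (as!k) = {{p,r},{q,r}}"
    proof -
      have "Suc k < L" using k by auto
      then show ?thesis using step[of k] that by blast
    qed
    have c1: "PT j r" "(PT j p \<and> (QT p \<or> QT r)) \<or> (PT j q \<and> (QT q \<or> QT r))"
      "\<not> (PT j p \<and> PT j q \<and> (QT p \<or> QT q))" using k t unfolding T_def by auto
    from crossT[OF t(1) j1 c1] obtain i s where iis: "(i,s) \<in> cl j" "(p,q,r) = (Cc j, Xs s i j, Ys s i j)" by blast
    have hdk: "{Xs s i j, Ys s i j} \<in> hd_of (as!k)" using hk iis by auto
    have "inC (f k)" using t iis unfolding inC_def by auto
    then have "k1 \<le> k" using before by (meson not_le)
    then have kp0: "p0 < k" using p0 by auto
    have i1: "1 \<le> i" "i \<le> n" using lits j iis by auto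
    obtain a t where a: "a \<le> p0" "f a = {Xs t i j, Ys t i j}" using G2[OF i1 j1] by blast
    have "t \<noteq> s"
    proof
      assume "t = s"
      have kL: "k < L" using k by auto
      have "a < k" using a kp0 by auto
      from ac[OF this kL] show False using \<open>t = s\<close> a hdk by auto
    qed
    then have tns: "t = (\<not> s)" by auto
    obtain a1 t1 where a1: "a1 \<le> p0" "f a1 = {Xs t1 i 1, Ys t1 i 1}" using G2[OF i1] j1 by fastforce
    have "t1 = t"
    proof (rule ccontr)
      assume "t1 \<noteq> t"
      then have "t = (\<not> t1)" by auto
      then show False using G3'[of a1 a t1 i 1 j] a1 a by auto
    qed
    have "\<sigma> i = s"
    proof (cases s)
      case True
      then have "f a1 = {XB i 1, YB i 1}" using a1 \<open>t1 = t\<close> tns by (simp add: Xs_def Ys_def)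
      then show ?thesis using True a1 unfolding \<sigma>_def by auto
    next
      case False
      have "\<not> \<sigma> i"
      proof
        assume "\<sigma> i"
        then obtain a' where a': "a' \<le> p0" "f a' = {XB i 1, YB i 1}" unfolding \<sigma>_def by auto
        then have "f a' = {Xs False i 1, Ys False i 1}" by (simp add: Xs_def Ys_def)
        moreover have "f a = {Xs (\<not> False) i j, Ys (\<not> False) i j}" using a tns False by simp
        ultimately show False using G3'[of a' a False i 1 j] a a' by blast
      qed
      then show ?thesis using False by simp
    qed
    then show ?thesis using iis by auto
  qed
  then show ?thesis unfolding satisfies_def by blast
qed




fun lam :: "(nat \<Rightarrow> bool) \<Rightarrow> nat \<Rightarrow> nat \<Rightarrow> leaf \<Rightarrow> nat" where
  "lam \<sigma> n m Alpha = 0"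
| "lam \<sigma> n m Beta = 1"
| "lam \<sigma> n m (B i) = 2*(m+1)*i"
| "lam \<sigma> n m (B' i) = 2*(m+1)*i + 1"
| "lam \<sigma> n m (X i j) = (if \<sigma> i then 2*(m+1)*(n+1) + 4*j + 4 else 2*(m+1)*i + 2*j)"
| "lam \<sigma> n m (Y i j) = (if \<sigma> i then 2*(m+1)*(n+1) + 4*j + 5 else 2*(m+1)*i + 2*j + 1)"
| "lam \<sigma> n m (XB i j) = (if \<sigma> i then 2*(m+1)*i + 2*j else 2*(m+1)*(n+1) + 4*j + 4)"
| "lam \<sigma> n m (YB i j) = (if \<sigma> i then 2*(m+1)*i + 2*j + 1 else 2*(m+1)*(n+1) + 4*j + 5)"
| "lam \<sigma> n m (Cc j) = 2*(m+1)*(n+1) + 4*j + 2"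
| "lam \<sigma> n m (D j) = 2*(m+1)*(n+1) + 4*j + 3"
| "lam \<sigma> n m Gamma = 2*(m+1)*(n+1) + 4*m + 7"

lemma lam_tr: "lam \<sigma> n m (Xs (\<not> \<sigma> i) i j) = 2*(m+1)*i + 2*j"
  "lam \<sigma> n m (Ys (\<not> \<sigma> i) i j) = 2*(m+1)*i + 2*j + 1"
  "lam \<sigma> n m (Xs (\<sigma> i) i j) = 2*(m+1)*(n+1) + 4*j + 4"
  "lam \<sigma> n m (Ys (\<sigma> i) i j) = 2*(m+1)*(n+1) + 4*j + 5"
  by (cases "\<sigma> i"; simp add: Xs_def Ys_def)+

definition gd :: "(nat \<Rightarrow> bool) \<Rightarrow> nat \<Rightarrow> nat \<Rightarrow> (nat \<Rightarrow> literal set) \<Rightarrow> triple \<Rightarrow> bool" where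
  "gd \<sigma> n m cl t = (case t of (p,q,r) \<Rightarrow> (p,q,r) \<in> R_of n m cl \<and> lam \<sigma> n m p < lam \<sigma> n m r \<and> lam \<sigma> n m q < lam \<sigma> n m r)"

lemma memP:
  assumes "1 \<le> i" "i \<le> n" "1 \<le> j" "j < m"
  shows "(Xs s i j, Ys s i j, Xs s i (Suc j)) \<in> R_of n m cl" "(Ys s i j, Xs s i (Suc j), Ys s i (Suc j)) \<in> R_of n m cl"
  using assms unfolding Rdefs Xs_def Ys_def by (cases s; force)+

lemma memS:
  assumes "1 \<le> i" "i \<le> n"
  shows "(B i, B' i, Xs s i 1) \<in> R_of n m cl" "(B' i, Xs s i 1, Ys s i 1) \<in> R_of n m cl"
  using assms unfolding Rdefs Xs_def Ys_def by (cases s; force)+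

lemma memE:
  assumes "1 \<le> i" "i \<le> n"
  shows "(X i m, Y i m, B (Suc i)) \<in> R_of n m cl" "(Y i m, B (Suc i), B' (Suc i)) \<in> R_of n m cl"
    "(XB i m, YB i m, B (Suc i)) \<in> R_of n m cl" "(XB i m, B (Suc i), B' (Suc i)) \<in> R_of n m cl"
  using assms unfolding Rdefs by force+

lemma memC:
  assumes "1 \<le> j" "j \<le> m" "(i,s) \<in> cl j"
  shows "(Cc j, D j, Xs s i j) \<in> R_of n m cl" "(Cc j, Xs s i j, Ys s i j) \<in> R_of n m cl"
    "(Cc j, Ys s i j, Cc (Suc j)) \<in> R_of n m cl"
  using assms unfolding Rdefs Xs_def Ys_def by (cases s; force)+

lemma memL:
  assumes "1 \<le> j" "j < m"
  shows "(Cc j, Cc (Suc j), D (Suc j)) \<in> R_of n m cl"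
  using assms unfolding Rdefs by force

lemma memConn:
  "(Alpha, Beta, B 1) \<in> R_of n m cl" "(Beta, B 1, B' 1) \<in> R_of n m cl"
  "(B (Suc n), B' (Suc n), Cc 1) \<in> R_of n m cl" "(B' (Suc n), Cc 1, D 1) \<in> R_of n m cl"
  "(Cc m, Cc (Suc m), Gamma) \<in> R_of n m cl"
  unfolding Rdefs by auto


lemma tw_Cons_intro: "u = {p,q} \<Longrightarrow> w = {p,r} \<or> w = {q,r} \<Longrightarrow> tw w ts v \<Longrightarrow> tw u ((p,q,r)#ts) v"
  by auto

fun gloop :: "bool \<Rightarrow> nat \<Rightarrow> nat \<Rightarrow> nat \<Rightarrow> triple list" where
  "gloop s i j 0 = []"
| "gloop s i j (Suc k) = (Xs s i j, Ys s i j, Xs s i (Suc j)) # (Ys s i j, Xs s i (Suc j), Ys s i (Suc j)) # gloop s i (Suc j) k"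

definition gend :: "bool \<Rightarrow> nat \<Rightarrow> nat \<Rightarrow> triple list" where
  "gend s i m = (if s then [(X i m, Y i m, B (Suc i)), (Y i m, B (Suc i), B' (Suc i))]
                 else [(XB i m, YB i m, B (Suc i)), (XB i m, B (Suc i), B' (Suc i))])"

definition gadget :: "bool \<Rightarrow> nat \<Rightarrow> nat \<Rightarrow> triple list" where
  "gadget s i m = [(B i, B' i, Xs s i 1), (B' i, Xs s i 1, Ys s i 1)] @ gloop s i 1 (m-1) @ gend s i m"

fun gs :: "(nat \<Rightarrow> bool) \<Rightarrow> nat \<Rightarrow> nat \<Rightarrow> nat \<Rightarrow> triple list" where
  "gs \<sigma> m i 0 = []"
| "gs \<sigma> m i (Suc k) = gadget (\<not> \<sigma> i) i m @ gs \<sigma> m (Suc i) k"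

definition cb :: "(nat \<Rightarrow> literal) \<Rightarrow> nat \<Rightarrow> triple list" where
  "cb li j = [(Cc j, D j, Xs (snd (li j)) (fst (li j)) j), (Cc j, Xs (snd (li j)) (fst (li j)) j, Ys (snd (li j)) (fst (li j)) j),
     (Cc j, Ys (snd (li j)) (fst (li j)) j, Cc (Suc j))]"

fun cs :: "(nat \<Rightarrow> literal) \<Rightarrow> nat \<Rightarrow> nat \<Rightarrow> triple list" where
  "cs li j 0 = []"
| "cs li j (Suc k) = cb li j @ (Cc j, Cc (Suc j), D (Suc j)) # cs li (Suc j) k"

lemma gloop_tw: "tw {Xs s i j, Ys s i j} (gloop s i j k) {Xs s i (j+k), Ys s i (j+k)}"
proof (induction k arbitrary: j)
  case 0 then show ?case by simp
next
  case (Suc k)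
  have "tw {Xs s i (Suc j), Ys s i (Suc j)} (gloop s i (Suc j) k) {Xs s i (j + Suc k), Ys s i (j + Suc k)}"
    using Suc[of "Suc j"] by simp
  then show ?case
    by (simp only: gloop.simps) (rule tw_Cons_intro[OF refl _ tw_Cons_intro[OF refl]], auto)
qed

lemma gloop_gd: "1 \<le> i \<Longrightarrow> i \<le> n \<Longrightarrow> 1 \<le> j \<Longrightarrow> j + k \<le> m \<Longrightarrow> \<forall>t\<in>set (gloop (\<not> \<sigma> i) i j k). gd \<sigma> n m cl t"
proof (induction k arbitrary: j)
  case 0 then show ?case by simp
next
  case (Suc k)
  then show ?case using memP[of i n j m "\<not> \<sigma> i" cl] Suc.IH[of "Suc j"] by (auto simp: gd_def lam_tr)
qed

lemma gadget_tw: "1 \<le> m \<Longrightarrow> tw {B i, B' i} (gadget s i m) {B (Suc i), B' (Suc i)}"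
proof -
  assume m: "1 \<le> m"
  have a: "tw {B i, B' i} [(B i, B' i, Xs s i 1), (B' i, Xs s i 1, Ys s i 1)] {Xs s i 1, Ys s i 1}"
    by (rule tw_Cons_intro[OF refl _ tw_Cons_intro[OF refl]]) auto
  have b: "tw {Xs s i 1, Ys s i 1} (gloop s i 1 (m-1)) {Xs s i m, Ys s i m}"
    using gloop_tw[of s i 1 "m-1"] m by simp
  have c: "tw {Xs s i m, Ys s i m} (gend s i m) {B (Suc i), B' (Suc i)}"
    by (cases s) (simp_all add: gend_def Xs_def Ys_def; rule tw_Cons_intro[OF refl _ tw_Cons_intro[OF refl]]; auto)+
  show ?thesis unfolding gadget_def tw_append using a b c by blast
qed

lemma gadget_gd: "1 \<le> m \<Longrightarrow> 1 \<le> i \<Longrightarrow> i \<le> n \<Longrightarrow> \<forall>t\<in>set (gadget (\<not> \<sigma> i) i m). gd \<sigma> n m cl t"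
proof -
  assume m: "1 \<le> m" and i: "1 \<le> i" "i \<le> n"
  have a: "\<forall>t\<in>set [(B i, B' i, Xs (\<not> \<sigma> i) i 1), (B' i, Xs (\<not> \<sigma> i) i 1, Ys (\<not> \<sigma> i) i 1)]. gd \<sigma> n m cl t"
    using memS[OF i, of "\<not> \<sigma> i" m cl] by (auto simp: gd_def lam_tr)
  have b: "\<forall>t\<in>set (gloop (\<not> \<sigma> i) i 1 (m-1)). gd \<sigma> n m cl t"
    using gloop_gd[OF i, of 1 "m-1" m \<sigma> cl] m by simp
  have e: "2*(m+1)*i + 2*m + 1 < 2*(m+1)*Suc i" by (simp add: algebra_simps)
  have c: "\<forall>t\<in>set (gend (\<not> \<sigma> i) i m). gd \<sigma> n m cl t"
    using memE[OF i, of m cl] e by (cases "\<sigma> i") (auto simp: gd_def gend_def)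
  show ?thesis unfolding gadget_def using a b c by auto
qed


lemma gs_tw: "1 \<le> m \<Longrightarrow> tw {B i, B' i} (gs \<sigma> m i k) {B (i+k), B' (i+k)}"
proof (induction k arbitrary: i)
  case 0 then show ?case by simp
next
  case (Suc k)
  have "tw {B (Suc i), B' (Suc i)} (gs \<sigma> m (Suc i) k) {B (i + Suc k), B' (i + Suc k)}"
    using Suc.IH[of "Suc i"] Suc.prems by simp
  then show ?case using gadget_tw[OF Suc.prems, of i "\<not> \<sigma> i"] by (auto simp: tw_append)
qed

lemma gs_gd: "1 \<le> m \<Longrightarrow> 1 \<le> i \<Longrightarrow> i + k \<le> Suc n \<Longrightarrow> \<forall>t\<in>set (gs \<sigma> m i k). gd \<sigma> n m cl t"
proof (induction k arbitrary: i)
  case 0 then show ?case by simp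
next
  case (Suc k)
  then show ?case using gadget_gd[of m i n \<sigma> cl] Suc.IH[of "Suc i"] by auto
qed

lemma cb_tw: "tw {Cc j, D j} (cb li j) {Cc j, Cc (Suc j)}"
  unfolding cb_def
  by (rule tw_Cons_intro[OF refl _ tw_Cons_intro[OF refl _ tw_Cons_intro[OF refl]]]) auto

lemma cb_gd: "1 \<le> j \<Longrightarrow> j \<le> m \<Longrightarrow> li j \<in> cl j \<Longrightarrow> \<sigma> (fst (li j)) = snd (li j) \<Longrightarrow>
   \<forall>t\<in>set (cb li j). gd \<sigma> n m cl t"
proof -
  assume j: "1 \<le> j" "j \<le> m" and l: "li j \<in> cl j" "\<sigma> (fst (li j)) = snd (li j)"
  obtain i s where is': "li j = (i, s)" by (cases "li j") auto
  have s: "s = \<sigma> i" using l is' by simp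
  have m: "(i,s) \<in> cl j" using l is' by simp
  show ?thesis using memC[where n=n and j=j and m=m and i=i and s=s and cl=cl, OF j m] unfolding cb_def is' s by (auto simp: gd_def lam_tr)
qed

lemma cs_tw: "tw {Cc j, D j} (cs li j k) {Cc (j+k), D (j+k)}"
proof (induction k arbitrary: j)
  case 0 then show ?case by simp
next
  case (Suc k)
  have "tw {Cc (Suc j), D (Suc j)} (cs li (Suc j) k) {Cc (j + Suc k), D (j + Suc k)}"
    using Suc.IH[of "Suc j"] by simp
  then have "tw {Cc j, Cc (Suc j)} ((Cc j, Cc (Suc j), D (Suc j)) # cs li (Suc j) k) {Cc (j + Suc k), D (j + Suc k)}"
    using tw_Cons_intro[of "{Cc j, Cc (Suc j)}" "Cc j" "Cc (Suc j)" "{Cc (Suc j), D (Suc j)}" "D (Suc j)"] by auto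
  then show ?case using cb_tw[of j li] by (auto simp: tw_append)
qed

lemma cs_gd: "1 \<le> j \<Longrightarrow> j + k \<le> m \<Longrightarrow> (\<forall>j'. 1 \<le> j' \<and> j' \<le> m \<longrightarrow> li j' \<in> cl j' \<and> \<sigma> (fst (li j')) = snd (li j')) \<Longrightarrow>
   \<forall>t\<in>set (cs li j k). gd \<sigma> n m cl t"
proof (induction k arbitrary: j)
  case 0 then show ?case by simp
next
  case (Suc k)
  have "\<forall>t\<in>set (cb li j). gd \<sigma> n m cl t" using cb_gd[of j m li cl \<sigma> n] Suc.prems by auto
  moreover have "gd \<sigma> n m cl (Cc j, Cc (Suc j), D (Suc j))" using memL[of j m n cl] Suc.prems by (auto simp: gd_def)
  moreover have "\<forall>t\<in>set (cs li (Suc j) k). gd \<sigma> n m cl t" using Suc.IH[of "Suc j"] Suc.prems by auto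
  ultimately show ?case by auto
qed

lemma fwd:
  assumes m1: "1 \<le> m" and sat: "satisfies \<sigma> m cl"
  shows "\<exists>as. is_path (V_of n m cl, A_of n m cl) {Alpha, Beta} {Cc (m+1), Gamma} as \<and> acyclic_path as"
proof -
  define li where "li j = (SOME x. x \<in> cl j \<and> \<sigma> (fst x) = snd x)" for j
  have li: "\<forall>j'. 1 \<le> j' \<and> j' \<le> m \<longrightarrow> li j' \<in> cl j' \<and> \<sigma> (fst (li j')) = snd (li j')"
  proof (intro allI impI)
    fix j assume j: "1 \<le> j \<and> j \<le> m"
    then have "\<exists>x. x \<in> cl j \<and> \<sigma> (fst x) = snd x" using sat unfolding satisfies_def by fastforce
    then show "li j \<in> cl j \<and> \<sigma> (fst (li j)) = snd (li j)" unfolding li_def by (rule someI_ex)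
  qed
  define pre where "pre = [(Alpha, Beta, B 1), (Beta, B 1, B' 1)]"
  define mid where "mid = [(B (Suc n), B' (Suc n), Cc 1), (B' (Suc n), Cc 1, D 1)]"
  define fin where "fin = [(Cc m, Cc (Suc m), Gamma)]"
  define ts where "ts = pre @ gs \<sigma> m 1 n @ mid @ cs li 1 (m-1) @ cb li m @ fin"
  have t1: "tw {Alpha, Beta} pre {B 1, B' 1}" unfolding pre_def
    by (rule tw_Cons_intro[OF refl _ tw_Cons_intro[OF refl]]) auto
  have t2: "tw {B 1, B' 1} (gs \<sigma> m 1 n) {B (Suc n), B' (Suc n)}" using gs_tw[OF m1, of 1 \<sigma> n] by simp
  have t3: "tw {B (Suc n), B' (Suc n)} mid {Cc 1, D 1}" unfolding mid_def
    by (rule tw_Cons_intro[OF refl _ tw_Cons_intro[OF refl]]) auto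
  have t4: "tw {Cc 1, D 1} (cs li 1 (m-1)) {Cc m, D m}" using cs_tw[of 1 li "m-1"] m1 by simp
  have t5: "tw {Cc m, D m} (cb li m) {Cc m, Cc (Suc m)}" by (rule cb_tw)
  have t6: "tw {Cc m, Cc (Suc m)} fin {Cc (m+1), Gamma}" unfolding fin_def
    by (rule tw_Cons_intro[OF refl]) auto
  have tw: "tw {Alpha, Beta} ts {Cc (m+1), Gamma}"
    unfolding ts_def tw_append using t1 t2 t3 t4 t5 t6 by blast
  have g1: "\<forall>t\<in>set pre. gd \<sigma> n m cl t" unfolding pre_def using memConn[where n=n and m=m and cl=cl]
    by (auto simp: gd_def algebra_simps)
  have g2: "\<forall>t\<in>set (gs \<sigma> m 1 n). gd \<sigma> n m cl t" using gs_gd[OF m1, of 1 n n \<sigma> cl] by simp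
  have g3: "\<forall>t\<in>set mid. gd \<sigma> n m cl t" unfolding mid_def using memConn[where n=n and m=m and cl=cl]
    by (auto simp: gd_def)
  have g4: "\<forall>t\<in>set (cs li 1 (m-1)). gd \<sigma> n m cl t" using cs_gd[of 1 "m-1" m li cl \<sigma> n] m1 li by simp
  have g5: "\<forall>t\<in>set (cb li m). gd \<sigma> n m cl t" using cb_gd[of m m li cl \<sigma> n] m1 li by simp
  have g6: "\<forall>t\<in>set fin. gd \<sigma> n m cl t" unfolding fin_def using memConn[where n=n and m=m and cl=cl]
    by (auto simp: gd_def)
  have gd: "\<forall>t\<in>set ts. gd \<sigma> n m cl t" unfolding ts_def using g1 g2 g3 g4 g5 g6 by auto
  define as where "as = map arc ts"
  have ne: "ts \<noteq> []" unfolding ts_def pre_def by simp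
  from tw_path[OF tw ne] have P: "tl_of (hd as) = {Alpha, Beta}" "{Cc (m+1), Gamma} \<in> hd_of (last as)"
    "\<forall>k. Suc k < length as \<longrightarrow> tl_of (as ! Suc k) \<in> hd_of (as ! k)" unfolding as_def by auto
  have inc: "\<forall>a\<in>set as. \<forall>h\<in>hd_of a. (\<lambda>t. \<Sum>l\<in>t. lam \<sigma> n m l) (tl_of a) < (\<lambda>t. \<Sum>l\<in>t. lam \<sigma> n m l) h"
  proof
    fix a assume "a \<in> set as"
    then obtain p q r where "(p,q,r) \<in> set ts" "a = arc (p,q,r)" unfolding as_def by auto
    moreover then have "lam \<sigma> n m p < lam \<sigma> n m r" "lam \<sigma> n m q < lam \<sigma> n m r"
      using gd by (auto simp: gd_def)
    ultimately show "\<forall>h\<in>hd_of a. (\<lambda>t. \<Sum>l\<in>t. lam \<sigma> n m l) (tl_of a) < (\<lambda>t. \<Sum>l\<in>t. lam \<sigma> n m l) h"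
      using arc_inc[of "lam \<sigma> n m" p r q] by simp
  qed
  have ad: "acyclic_path as \<and> distinct as" by (rule rank_acyc[OF P(3) inc])
  have sub: "set as \<subseteq> A_of n m cl" unfolding as_def A_of_def using gd by (auto simp: gd_def)
  have "is_path (V_of n m cl, A_of n m cl) {Alpha, Beta} {Cc (m+1), Gamma} as"
    unfolding is_path_def using ne ad sub P by (auto simp: as_def)
  then show ?thesis using ad by blast
qed



theorem lemma1:
  fixes n m :: nat and cl :: "nat \<Rightarrow> literal set"
  assumes "m \<ge> 1"
    and "\<forall>j\<in>{1..m}. card (cl j) = 2 \<or> card (cl j) = 3"
    and "\<forall>j\<in>{1..m}. \<forall>(i, s)\<in>cl j. i \<in> {1..n}"
  shows "(\<exists>as. is_path (V_of n m cl, A_of n m cl) {Alpha, Beta} {Cc (m+1), Gamma} as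
                \<and> acyclic_path as)
         \<longleftrightarrow> (\<exists>\<sigma>. satisfies \<sigma> m cl)"
  using rev_dir[OF assms(1) assms(3)] fwd[OF assms(1)] by blast

end
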